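(* Let $T=\begin{pmatrix}1&1\\0&1\end{pmatrix}$. For all integers $n,m$, each of the matrices $$\begin{pmatrix}1&n\\0&1\end{pmatrix},\qquad \begin{pmatrix}-1&n\\0&-1\end{pmatrix},\qquad \begin{pmatrix}n&1-nm\\-1&m\end{pmatrix},\qquad \begin{pmatrix}n&nm-1\\1&m\end{pmatrix}$$ can be written in the form $T^{\varepsilon}[A_1,B_1][A_2,B_2]$ with $\varepsilon\in\{-1,0,1\}$ and $A_1,B_1,A_2,B_2\in\mathsf{GL}(2,\mathbb{Z})$; i.e. each is, up to at most one factor $T^{\pm1}$, a product of at most two commutators in $\mathsf{GL}(2,\mathbb{Z})$.
   Context: $[A,B]=ABA^{-1}B^{-1}$. A product of "at most two" commutators includes products where some commutator factors are trivial. *)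

theory Defs
  imports "HOL-Analysis.Analysis"
begin

text \<open>2x2 integer matrices are elements of type int^2^2 (row i, column j is A $ i $ j);
  GL(2,Z) is the set of matrices that are invertible over the integers
  (library notion invertible: two-sided inverse with integer entries).\<close>

definition mat2 :: "int \<Rightarrow> int \<Rightarrow> int \<Rightarrow> int \<Rightarrow> int^2^2" where
  "mat2 a b c d = vector [vector [a, b], vector [c, d]]"

definition commutator :: "int^2^2 \<Rightarrow> int^2^2 \<Rightarrow> int^2^2" where
  "commutator A B = A ** B ** matrix_inv A ** matrix_inv B"

definition Tmat :: "int^2^2" where
  "Tmat = mat2 1 1 0 1"

text \<open>Integer power T^e, needed only for e in {-1,0,1}.\<close>
definition Tpow :: "int \<Rightarrow> int^2^2" where
  "Tpow e = (if e = 1 then Tmat else if e = 0 then mat 1 else matrix_inv Tmat)"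

end

theory Submission imports Defs begin
lemma mat2_mult: "mat2 a b c d ** mat2 e f g h = mat2 (a*e+b*g) (a*f+b*h) (c*e+d*g) (c*f+d*h)"
  unfolding mat2_def matrix_matrix_mult_def
  by (simp add: vec_eq_iff forall_2 sum_2)
lemma mat2_eq: "mat2 a b c d = mat2 e f g h \<longleftrightarrow> a=e \<and> b=f \<and> c=g \<and> d=h"
  unfolding mat2_def by (auto simp add: vec_eq_iff forall_2)
lemma mat1: "mat 1 = mat2 1 0 0 1"
  unfolding mat2_def by (simp add: vec_eq_iff forall_2 mat_def)
lemma inv_unique: fixes A B :: "int^2^2" assumes "A ** B = mat 1" "B ** A = mat 1"
  shows "matrix_inv A = B" "invertible A"
proof -
  show "invertible A" using assms invertible_def by blast
  obtain A' where "A ** A' = mat 1" "A' ** A = mat 1" "matrix_inv A = A'"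
    using someI_ex[of "\<lambda>A'. A ** A' = mat 1 \<and> A' ** A = mat 1"] assms unfolding matrix_inv_def by blast
  then show "matrix_inv A = B" by (metis assms(1) matrix_mul_assoc matrix_mul_lid matrix_mul_rid)
qed
lemma inv_mat2: assumes "a*d-b*c = u" "u*u = 1"
  shows "matrix_inv (mat2 a b c d) = mat2 (u*d) (-u*b) (-u*c) (u*a)" "invertible (mat2 a b c d)"
proof -
  have e1: "a*(u*d) + b*(-u*c) = 1"
  proof - have "a*(u*d) + b*(-u*c) = u*(a*d-b*c)" by (simp add: algebra_simps) then show ?thesis using assms by simp qed
  have e2: "c*(-u*b) + d*(u*a) = 1"
  proof - have "c*(-u*b) + d*(u*a) = u*(a*d-b*c)" by (simp add: algebra_simps) then show ?thesis using assms by simp qed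
  have e3: "u*d*a + -u*b*c = 1"
  proof - have "u*d*a + -u*b*c = u*(a*d-b*c)" by (simp add: algebra_simps) then show ?thesis using assms by simp qed
  have e4: "-u*c*b + u*a*d = 1"
  proof - have "-u*c*b + u*a*d = u*(a*d-b*c)" by (simp add: algebra_simps) then show ?thesis using assms by simp qed
  note e = e1 e2 e3 e4
  have 1: "mat2 a b c d ** mat2 (u*d) (-u*b) (-u*c) (u*a) = mat 1"
    unfolding mat2_mult mat1 mat2_eq using e by (simp add: algebra_simps e)
  have 2: "mat2 (u*d) (-u*b) (-u*c) (u*a) ** mat2 a b c d = mat 1"
    unfolding mat2_mult mat1 mat2_eq using e by (simp add: algebra_simps e)
  show "matrix_inv (mat2 a b c d) = mat2 (u*d) (-u*b) (-u*c) (u*a)" "invertible (mat2 a b c d)"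
    using inv_unique[OF 1 2] by auto
qed
lemma inv1: "a*d-b*c = 1 \<Longrightarrow> matrix_inv (mat2 a b c d) = mat2 d (-b) (-c) a"
  using inv_mat2[of a d b c 1] by simp
lemma inv2: "a*d-b*c = -1 \<Longrightarrow> matrix_inv (mat2 a b c d) = mat2 (-d) b c (-a)"
  using inv_mat2[of a d b c "-1"] by simp
lemma invt1: "a*d-b*c = 1 \<Longrightarrow> invertible (mat2 a b c d)"
  using inv_mat2[of a d b c 1] by simp
lemma invt2: "a*d-b*c = -1 \<Longrightarrow> invertible (mat2 a b c d)"
  using inv_mat2[of a d b c "-1"] by simp

lemma inv_props: fixes A :: "int^2^2" assumes "invertible A"
  shows "A ** matrix_inv A = mat 1" "matrix_inv A ** A = mat 1"
proof -
  obtain A' where "A ** A' = mat 1" "A' ** A = mat 1" using assms invertible_def by blast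
  then have "matrix_inv A = A'" using inv_unique by blast
  then show "A ** matrix_inv A = mat 1" "matrix_inv A ** A = mat 1" using \<open>A ** A' = mat 1\<close> \<open>A' ** A = mat 1\<close> by auto
qed

lemma cancel2: fixes G G' X :: "int^2^2" assumes "G' ** G = mat 1" shows "G' ** (G ** X) = X"
  by (metis assms matrix_mul_assoc matrix_mul_lid)

lemma conj_comm: fixes G G' A B :: "int^2^2"
  assumes g: "G ** G' = mat 1" "G' ** G = mat 1" and a: "invertible A" "invertible B"
  shows "commutator (G**A**G') (G**B**G') = G ** commutator A B ** G'"
    "invertible (G**A**G')"
proof -
  have "invertible G" "invertible G'" using g invertible_def by blast+
  then show "invertible (G**A**G')" using a invertible_mult by blast
  have iA: "matrix_inv (G**A**G') = G ** matrix_inv A ** G'"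
    if "invertible A" for A
    using inv_props[OF that] g
    by (intro inv_unique) (simp_all add: matrix_mul_assoc[symmetric] cancel2)
  show "commutator (G**A**G') (G**B**G') = G ** commutator A B ** G'"
    unfolding commutator_def iA[OF a(1)] iA[OF a(2)]
    by (simp add: matrix_mul_assoc[symmetric] cancel2 g)
qed

definition Tp :: "int \<Rightarrow> int^2^2" where "Tp k = mat2 1 k 0 1"

lemma Tpow_eq: "e \<in> {-1,0,1} \<Longrightarrow> Tpow e = Tp e"
  by (auto simp: Tpow_def Tp_def Tmat_def mat1 inv1)

lemma Tp_inv: "Tp k ** Tp (-k) = mat 1" "Tp (-k) ** Tp k = mat 1"
  by (simp_all add: Tp_def mat2_mult mat1)

lemma Tp_comm: "Tp a ** Tp b = Tp b ** Tp a"
  by (simp add: Tp_def mat2_mult add.commute)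

lemma transfer:
  assumes "\<exists>e \<in> {-1, 0, 1 :: int}. \<exists>A1 B1 A2 B2 :: int^2^2.
           invertible A1 \<and> invertible B1 \<and> invertible A2 \<and> invertible B2 \<and>
           X = Tpow e ** commutator A1 B1 ** commutator A2 B2"
  shows "\<exists>e \<in> {-1, 0, 1 :: int}. \<exists>A1 B1 A2 B2 :: int^2^2.
           invertible A1 \<and> invertible B1 \<and> invertible A2 \<and> invertible B2 \<and>
           Tp k ** X ** Tp (-k) = Tpow e ** commutator A1 B1 ** commutator A2 B2"
proof -
  obtain e A1 B1 A2 B2 where e: "e \<in> {-1,0,1::int}" and i: "invertible A1" "invertible B1" "invertible A2" "invertible B2"
    and X: "X = Tpow e ** commutator A1 B1 ** commutator A2 B2" using assms by blast
  let ?G = "Tp k" and ?G' = "Tp (-k)"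
  have comm: "Tp k ** (Tp e ** Y) = Tp e ** (Tp k ** Y)" for Y :: "int^2^2"
    by (metis matrix_mul_assoc Tp_comm)
  have "Tp k ** X ** Tp (-k) = Tpow e ** commutator (?G**A1**?G') (?G**B1**?G') ** commutator (?G**A2**?G') (?G**B2**?G')"
    unfolding X conj_comm[OF Tp_inv i(1,2)] conj_comm[OF Tp_inv i(3,4)] Tpow_eq[OF e]
    using comm by (simp add: matrix_mul_assoc[symmetric] cancel2 Tp_inv)
  then show ?thesis using e i conj_comm(2)[OF Tp_inv] by blast
qed

lemma wit: "ee \<in> {-1,0,1::int} \<Longrightarrow> invertible P \<Longrightarrow> invertible Q \<Longrightarrow> invertible R \<Longrightarrow> invertible U \<Longrightarrow>
   X = Tpow ee ** commutator P Q ** commutator R U \<Longrightarrow>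
   \<exists>e \<in> {-1, 0, 1 :: int}. \<exists>A1 B1 A2 B2 :: int^2^2.
           invertible A1 \<and> invertible B1 \<and> invertible A2 \<and> invertible B2 \<and>
           X = Tpow e ** commutator A1 B1 ** commutator A2 B2"
  by blast

lemma parity: obtains j r :: int where "k = 2*j + r" "r = 0 \<or> r = 1"
proof (rule that[of "k div 2" "k mod 2"])
  show "k = 2 * (k div 2) + k mod 2" by simp
  show "k mod 2 = 0 \<or> k mod 2 = 1" by presburger
qed

lemma L_ST: "\<exists>e \<in> {-1, 0, 1 :: int}. \<exists>A1 B1 A2 B2 :: int^2^2.
           invertible A1 \<and> invertible B1 \<and> invertible A2 \<and> invertible B2 \<and>
           mat2 0 (-1) 1 k = Tpow e ** commutator A1 B1 ** commutator A2 B2"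
proof -
  obtain j r where k: "k = 2*j+r" "r = 0 \<or> r = 1" by (rule parity)
  from k(2) show ?thesis
  proof
    assume "r = 0"
    show ?thesis
      by (rule wit[where ee=1 and P="mat2 (-1) (-1) 0 1" and Q="mat2 (-1) (-1) 1 0" and R="mat2 1 0 0 (-1)" and U="mat2 1 (-j) 0 1"])
        (simp_all add: invt1 invt2 Tpow_eq Tp_def commutator_def inv1 inv2 mat2_mult mat2_eq k \<open>r=0\<close>)
  next
    assume "r = 1"
    show ?thesis
      by (rule wit[where ee=0 and P="mat2 (-2) (-1) (-1) 0" and Q="mat2 (-2) (-1) 1 1" and R="mat2 1 0 0 (-1)" and U="mat2 1 (-j) 0 1"])
        (simp_all add: invt1 invt2 Tpow_eq Tp_def commutator_def inv1 inv2 mat2_mult mat2_eq k \<open>r=1\<close>)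
  qed
qed

lemma L_SiT: "\<exists>e \<in> {-1, 0, 1 :: int}. \<exists>A1 B1 A2 B2 :: int^2^2.
           invertible A1 \<and> invertible B1 \<and> invertible A2 \<and> invertible B2 \<and>
           mat2 0 1 (-1) (-k) = Tpow e ** commutator A1 B1 ** commutator A2 B2"
proof -
  obtain j r where k: "k = 2*j+r" "r = 0 \<or> r = 1" by (rule parity)
  from k(2) show ?thesis
  proof
    assume "r = 0"
    show ?thesis
      by (rule wit[where ee=1 and P="mat2 (-2) (-1) 1 0" and Q="mat2 (-1) (-1) (-2) (-1)" and R="mat2 1 0 0 (-1)" and U="mat2 1 (-j) 0 1"])
        (simp_all add: invt1 invt2 Tpow_eq Tp_def commutator_def inv1 inv2 mat2_mult mat2_eq k \<open>r=0\<close>)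
  next
    assume "r = 1"
    show ?thesis
      by (rule wit[where ee=0 and P="mat2 (-1) (-1) 0 1" and Q="mat2 0 (-1) (-1) 0" and R="mat2 1 0 0 (-1)" and U="mat2 1 (-j) 0 1"])
        (simp_all add: invt1 invt2 Tpow_eq Tp_def commutator_def inv1 inv2 mat2_mult mat2_eq k \<open>r=1\<close>)
  qed
qed

theorem mainTheorem12:
  fixes n m :: int
  assumes "M \<in> {mat2 1 n 0 1, mat2 (-1) n 0 (-1), mat2 n (1 - n*m) (-1) m, mat2 n (n*m - 1) 1 m}"
  shows "\<exists>e \<in> {-1, 0, 1 :: int}. \<exists>A1 B1 A2 B2 :: int^2^2.
           invertible A1 \<and> invertible B1 \<and> invertible A2 \<and> invertible B2 \<and>
           M = Tpow e ** commutator A1 B1 ** commutator A2 B2"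
proof -
  have c1: ?thesis if M: "M = mat2 1 n 0 1"
  proof -
    obtain j r where k: "n = 2*j+r" "r = 0 \<or> r = 1" by (rule parity)
    then have r: "r \<in> {-1,0,1}" by auto
    show ?thesis
      by (rule wit[where ee=r and P="mat2 1 0 0 (-1)" and Q="mat2 1 (-j) 0 1" and R="mat 1" and U="mat 1", OF r])
        (simp_all add: M mat1 invt1 invt2 Tpow_eq[OF r] Tp_def commutator_def inv1 inv2 mat2_mult mat2_eq k)
  qed
  have c2: ?thesis if M: "M = mat2 (-1) n 0 (-1)"
  proof -
    obtain j r where k: "-n = 2*j+r" "r = 0 \<or> r = 1" by (rule parity)
    then have r: "r \<in> {-1,0,1}" by auto
    show ?thesis
      by (rule wit[where ee=r and P="mat2 1 0 0 (-1)" and Q="mat2 1 (-j) 0 1" and R="mat2 1 0 0 (-1)" and U="mat2 0 (-1) 1 0", OF r])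
        (simp_all add: M invt1 invt2 Tpow_eq[OF r] Tp_def commutator_def inv1 inv2 mat2_mult mat2_eq k, use k in linarith)
  qed
  have c3: ?thesis if M: "M = mat2 n (1 - n*m) (-1) m"
  proof -
    have "M = Tp (-n) ** mat2 0 1 (-1) (-(-(n+m))) ** Tp (- (-n))"
      by (simp add: M Tp_def mat2_mult mat2_eq algebra_simps)
    then show ?thesis using transfer[OF L_SiT] by metis
  qed
  have c4: ?thesis if M: "M = mat2 n (n*m - 1) 1 m"
  proof -
    have "M = Tp n ** mat2 0 (-1) 1 (n+m) ** Tp (-n)"
      by (simp add: M Tp_def mat2_mult mat2_eq algebra_simps)
    then show ?thesis using transfer[OF L_ST] by metis
  qed
  show ?thesis using assms c1 c2 c3 c4 by blast
qed
end
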